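(* Let $X$ be a finite-dimensional simplicial complex and let $\Sigma$ be a maximal simplex of $\mathcal{N}(X)$. Then there is a vertex $x$ of $X$ with $\Sigma=\Sigma_x$. If moreover, for all vertices $a,b$ of $X$, $\Sigma_a\subseteq\Sigma_b$ implies $a=b$, then for every vertex $y$ of $X$, $\Sigma_y$ is a maximal simplex of $\mathcal{N}(X)$.
   Context: A maximal simplex of a simplicial complex $Y$ is a maximal collection of vertices of $Y$ such that every finite subset is a simplex of $Y$. $\mathcal{N}(X)$ is the nerve of the collection of maximal simplices of $X$: its vertices are the maximal simplices of $X$, and a finite set of them is a simplex iff their common intersection is non-empty. For a vertex $x$ of $X$, $\Sigma_x$ is the collection of maximal simplices of $X$ containing $x$. *)

theory Defs
  imports Main
begin

definition simplicial_complex :: "'a set \<Rightarrow> 'a set set \<Rightarrow> bool" where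
  "simplicial_complex V K \<longleftrightarrow>
     (\<forall>\<sigma>\<in>K. finite \<sigma> \<and> \<sigma> \<noteq> {} \<and> \<sigma> \<subseteq> V) \<and>
     (\<forall>v\<in>V. {v} \<in> K) \<and>
     (\<forall>\<sigma>\<in>K. \<forall>\<tau>. \<tau> \<subseteq> \<sigma> \<and> \<tau> \<noteq> {} \<longrightarrow> \<tau> \<in> K)"

definition finite_dimensional :: "'a set set \<Rightarrow> bool" where
  "finite_dimensional K \<longleftrightarrow> (\<exists>n::nat. \<forall>\<sigma>\<in>K. card \<sigma> \<le> n)"

definition full_set :: "'a set \<Rightarrow> 'a set set \<Rightarrow> 'a set \<Rightarrow> bool" where
  "full_set V K M \<longleftrightarrow> M \<subseteq> V \<and> (\<forall>\<tau>. finite \<tau> \<and> \<tau> \<noteq> {} \<and> \<tau> \<subseteq> M \<longrightarrow> \<tau> \<in> K)"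

definition maximal_simplex :: "'a set \<Rightarrow> 'a set set \<Rightarrow> 'a set \<Rightarrow> bool" where
  "maximal_simplex V K M \<longleftrightarrow> M \<noteq> {} \<and> full_set V K M \<and>
     (\<forall>M'. M \<subseteq> M' \<and> full_set V K M' \<longrightarrow> M' = M)"

definition nerve_vertices :: "'a set \<Rightarrow> 'a set set \<Rightarrow> 'a set set" where
  "nerve_vertices V K = {M. maximal_simplex V K M}"

definition nerve_simplices :: "'a set \<Rightarrow> 'a set set \<Rightarrow> 'a set set set" where
  "nerve_simplices V K = {F. finite F \<and> F \<noteq> {} \<and> F \<subseteq> nerve_vertices V K \<and> \<Inter>F \<noteq> {}}"

definition Sigma_at :: "'a set \<Rightarrow> 'a set set \<Rightarrow> 'a \<Rightarrow> 'a set set" where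
  "Sigma_at V K x = {M. maximal_simplex V K M \<and> x \<in> M}"

end

theory Submission
  imports Defs
begin

lemma full_finite:
  assumes "finite_dimensional K" "full_set V K M"
  shows "finite M \<and> (\<exists>n. \<forall>M'. full_set V K M' \<longrightarrow> card M' \<le> n)"
proof -
  obtain n where n: "\<forall>\<sigma>\<in>K. card \<sigma> \<le> n" using assms(1) unfolding finite_dimensional_def by blast
  have fin: "finite M'" if "full_set V K M'" for M'
  proof (rule ccontr)
    assume "\<not> finite M'"
    then obtain B where B: "finite B" "card B = Suc n" "B \<subseteq> M'"
      using infinite_arbitrarily_large by blast
    then have "B \<noteq> {}" by auto
    with B that have "B \<in> K" unfolding full_set_def by blast
    with n B show False by fastforce
  qed
  have "card M' \<le> n" if "full_set V K M'" for M'
  proof (cases "M' = {}")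
    case True then show ?thesis by simp
  next
    case False
    with fin[OF that] that have "M' \<in> K" unfolding full_set_def by blast
    with n show ?thesis by blast
  qed
  with fin assms(2) show ?thesis by blast
qed

lemma common_vertex:
  assumes sc: "simplicial_complex V K" and fd: "finite_dimensional K"
    and F: "F \<noteq> {}" "full_set (nerve_vertices V K) (nerve_simplices V K) F"
  shows "\<exists>x\<in>V. \<forall>M\<in>F. x \<in> M"
proof -
  have Fmax: "\<And>M. M \<in> F \<Longrightarrow> maximal_simplex V K M"
    using F(2) unfolding full_set_def nerve_vertices_def by blast
  have Fint: "\<And>G. finite G \<Longrightarrow> G \<noteq> {} \<Longrightarrow> G \<subseteq> F \<Longrightarrow> \<Inter>G \<noteq> {}"
    using F(2) unfolding full_set_def nerve_simplices_def by blast
  have Mfin: "\<And>M. M \<in> F \<Longrightarrow> finite M"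
    using Fmax fd full_finite unfolding maximal_simplex_def by blast
  obtain M0 where M0: "M0 \<in> F" using F by blast
  let ?P = "\<lambda>G. finite G \<and> G \<noteq> {} \<and> G \<subseteq> F"
  have "?P {M0}" using M0 by simp
  from ex_has_least_nat[of ?P, OF this, of "\<lambda>G. card (\<Inter>G)"]
  obtain G where G: "?P G" and least: "\<And>G'. ?P G' \<Longrightarrow> card (\<Inter>G) \<le> card (\<Inter>G')" by blast
  have ne: "\<Inter>G \<noteq> {}" using G Fint by blast
  have finG: "finite (\<Inter>G)" using G Mfin by (meson Inter_lower finite_subset subset_eq ex_in_conv)
  then obtain x where x: "x \<in> \<Inter>G" using ne by blast
  have allx: "\<forall>M\<in>F. x \<in> M"
  proof
    fix M assume M: "M \<in> F"
    have P2: "?P (insert M G)" using G M by auto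
    have sub: "\<Inter>(insert M G) \<subseteq> \<Inter>G" by auto
    have "card (\<Inter>G) \<le> card (\<Inter>(insert M G))" using least[OF P2] .
    then have "\<Inter>(insert M G) = \<Inter>G" using card_subset_eq[OF finG sub] by (metis card_mono finG sub le_antisym)
    then show "x \<in> M" using x by auto
  qed
  moreover have "x \<in> V" using M0 Fmax allx
    unfolding maximal_simplex_def full_set_def by (metis subsetD)
  ultimately show ?thesis by blast
qed

lemma Sigma_full:
  "full_set (nerve_vertices V K) (nerve_simplices V K) (Sigma_at V K x)"
  unfolding full_set_def nerve_simplices_def nerve_vertices_def Sigma_at_def by blast

lemma Sigma_nonempty:
  assumes sc: "simplicial_complex V K" and fd: "finite_dimensional K" and y: "y \<in> V"
  shows "Sigma_at V K y \<noteq> {}"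
proof -
  have f1: "full_set V K {y}" using sc y unfolding simplicial_complex_def full_set_def
    by (metis subset_singletonD singleton_iff subsetI)
  obtain n where n: "\<forall>M'. full_set V K M' \<longrightarrow> card M' \<le> n" using full_finite[OF fd f1] by blast
  let ?P = "\<lambda>M. full_set V K M \<and> y \<in> M"
  have "?P {y}" using f1 by simp
  from ex_has_greatest_nat[of ?P, OF this, of card "Suc n"] n
  obtain M where M: "?P M" and gr: "\<And>M'. ?P M' \<Longrightarrow> card M' \<le> card M" by fastforce
  have "maximal_simplex V K M"
    unfolding maximal_simplex_def
  proof (intro conjI allI impI)
    show "M \<noteq> {}" using M by auto
    show "full_set V K M" using M by simp
    fix M' assume a: "M \<subseteq> M' \<and> full_set V K M'"
    then have "?P M'" using M by auto
    then have "card M' \<le> card M" using gr by blast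
    moreover have "finite M'" using full_finite[OF fd] a by blast
    ultimately show "M' = M" using a card_subset_eq by (metis card_mono le_antisym)
  qed
  then show ?thesis using M unfolding Sigma_at_def by blast
qed

theorem lemma3p4:
  fixes V :: "'a set" and K :: "'a set set" and \<Sigma> :: "'a set set"
  assumes "simplicial_complex V K"
    and "finite_dimensional K"
    and "maximal_simplex (nerve_vertices V K) (nerve_simplices V K) \<Sigma>"
  shows "(\<exists>x\<in>V. \<Sigma> = Sigma_at V K x) \<and>
         ((\<forall>a\<in>V. \<forall>b\<in>V. Sigma_at V K a \<subseteq> Sigma_at V K b \<longrightarrow> a = b) \<longrightarrow>
          (\<forall>y\<in>V. maximal_simplex (nerve_vertices V K) (nerve_simplices V K) (Sigma_at V K y)))"
proof
  have key: "\<exists>x\<in>V. \<Sigma>' \<subseteq> Sigma_at V K x"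
    if ne: "\<Sigma>' \<noteq> {}" and fs: "full_set (nerve_vertices V K) (nerve_simplices V K) \<Sigma>'" for \<Sigma>'
  proof -
    obtain x where "x \<in> V" "\<forall>M\<in>\<Sigma>'. x \<in> M" using common_vertex[OF assms(1,2) ne fs] by blast
    moreover have "\<Sigma>' \<subseteq> nerve_vertices V K" using fs unfolding full_set_def by blast
    ultimately show ?thesis unfolding Sigma_at_def nerve_vertices_def by blast
  qed
  show "\<exists>x\<in>V. \<Sigma> = Sigma_at V K x"
  proof -
    have "\<Sigma> \<noteq> {}" "full_set (nerve_vertices V K) (nerve_simplices V K) \<Sigma>"
      using assms(3) unfolding maximal_simplex_def by auto
    then obtain x where "x \<in> V" "\<Sigma> \<subseteq> Sigma_at V K x" using key by blast
    then show ?thesis using assms(3) Sigma_full unfolding maximal_simplex_def by metis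
  qed
  show "(\<forall>a\<in>V. \<forall>b\<in>V. Sigma_at V K a \<subseteq> Sigma_at V K b \<longrightarrow> a = b) \<longrightarrow>
          (\<forall>y\<in>V. maximal_simplex (nerve_vertices V K) (nerve_simplices V K) (Sigma_at V K y))"
  proof (intro impI ballI)
    fix y assume inj: "\<forall>a\<in>V. \<forall>b\<in>V. Sigma_at V K a \<subseteq> Sigma_at V K b \<longrightarrow> a = b" and y: "y \<in> V"
    show "maximal_simplex (nerve_vertices V K) (nerve_simplices V K) (Sigma_at V K y)"
      unfolding maximal_simplex_def
    proof (intro conjI allI impI)
      show "Sigma_at V K y \<noteq> {}" using Sigma_nonempty[OF assms(1,2) y] .
      show "full_set (nerve_vertices V K) (nerve_simplices V K) (Sigma_at V K y)" by (rule Sigma_full)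
      fix S assume a: "Sigma_at V K y \<subseteq> S \<and> full_set (nerve_vertices V K) (nerve_simplices V K) S"
      then have "S \<noteq> {}" using Sigma_nonempty[OF assms(1,2) y] by blast
      then obtain x where x: "x \<in> V" "S \<subseteq> Sigma_at V K x" using key a by blast
      then have "y = x" using inj y a by blast
      then show "S = Sigma_at V K y" using a x by blast
    qed
  qed
qed

end
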